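(* Let $f(x,W)=\psi\big(\phi(\cdots\phi(\phi(xW^1+b^1)W^2+b^2)\cdots)W^l+b^l\big)$ be a fully-connected neural network with input $x=(x^1,\dots,x^m)\in\mathbb{R}^m$, parameters $W=(W^1,b^1,\dots,W^l,b^l)$ (so the $j$-th neuron of the first hidden layer has pre-activation $\sum_{i=1}^m x^i w^1_{ij}+b^1_j$, where $w^1_{ij}$ is the $(i,j)$ entry of $W^1$), intermediate nonlinearity $\phi$ and output link function $\psi$. Let $D=\{(x_k,y_k)\}_{k=1}^n$ be a training set, let the likelihood be $p(y\mid x,W)=\ell(y,f(x,W))$ for some function $\ell$, with $p(D\mid W)=\prod_{k=1}^n p(y_k\mid x_k,W)$, and let the posterior be $p(W\mid D)\propto p(D\mid W)\,p(W)$ for a prior density $p(W)$. Suppose that for some input index $i$ the feature $x_k^i=0$ for every training input $x_k$, and suppose that for some first-layer neuron $j$ the prior factorizes as $p(W)=p(w^1_{ij})\cdot p(W\setminus w^1_{ij})$, where $W\setminus w^1_{ij}$ denotes all parameters except $w^1_{ij}$. Then the posterior factorizes as $$p(W\mid D)=p(W\setminus w^1_{ij}\mid D)\cdot p(w^1_{ij}),$$ i.e. the marginal posterior of $w^1_{ij}$ coincides with its prior and is independent of the remaining parameters. Consequently, a MAP solution $\arg\max_W p(W\mid D)$ sets $w^1_{ij}$ to a value of maximum prior density $p(w^1_{ij})$.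
   Context: Upper indices on inputs denote features and lower indices denote data points. A MAP solution is a maximizer of the posterior density $p(W\mid D)$. *)

theory Defs
  imports "HOL-Analysis.Analysis"
begin

text \<open>Parameter indices of a fully-connected network with L layers and widths d 0 = m (input),
 d 1, ..., d L.  Wt t i j is the (i,j) entry of the weight matrix W^t (i < d (t-1), j < d t),
 Bt t j is the j-th entry of the bias b^t.  Indices are 0-based.\<close>
datatype pidx = Wt nat nat nat | Bt nat nat

definition param_index :: "nat \<Rightarrow> (nat \<Rightarrow> nat) \<Rightarrow> pidx set" where
  "param_index L d =
     {Wt t i j | t i j. 1 \<le> t \<and> t \<le> L \<and> i < d (t - 1) \<and> j < d t}
   \<union> {Bt t j | t j. 1 \<le> t \<and> t \<le> L \<and> j < d t}"

definition param_measure :: "nat \<Rightarrow> (nat \<Rightarrow> nat) \<Rightarrow> (pidx \<Rightarrow> real) measure" where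
  "param_measure L d = PiM (param_index L d) (\<lambda>_. lborel)"

definition preact :: "(nat \<Rightarrow> nat) \<Rightarrow> nat \<Rightarrow> (pidx \<Rightarrow> real) \<Rightarrow> (nat \<Rightarrow> real) \<Rightarrow> nat \<Rightarrow> real" where
  "preact d t \<theta> h = (\<lambda>j. if j < d t then (\<Sum>i<d (t - 1). h i * \<theta> (Wt t i j)) + \<theta> (Bt t j) else 0)"

fun hidden :: "(real \<Rightarrow> real) \<Rightarrow> (nat \<Rightarrow> nat) \<Rightarrow> (pidx \<Rightarrow> real) \<Rightarrow> (nat \<Rightarrow> real) \<Rightarrow> nat \<Rightarrow> (nat \<Rightarrow> real)" where
  "hidden \<phi> d \<theta> x 0 = x"
| "hidden \<phi> d \<theta> x (Suc t) = (\<lambda>j. \<phi> (preact d (Suc t) \<theta> (hidden \<phi> d \<theta> x t) j))"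

definition net :: "(real \<Rightarrow> real) \<Rightarrow> ((nat \<Rightarrow> real) \<Rightarrow> 'o) \<Rightarrow> nat \<Rightarrow> (nat \<Rightarrow> nat)
    \<Rightarrow> (nat \<Rightarrow> real) \<Rightarrow> (pidx \<Rightarrow> real) \<Rightarrow> 'o" where
  "net \<phi> \<psi> L d x \<theta> = \<psi> (preact d L \<theta> (hidden \<phi> d \<theta> x (L - 1)))"

definition likelihood :: "('y \<Rightarrow> 'o \<Rightarrow> real) \<Rightarrow> ((nat \<Rightarrow> real) \<Rightarrow> (pidx \<Rightarrow> real) \<Rightarrow> 'o)
    \<Rightarrow> (nat \<Rightarrow> nat \<Rightarrow> real) \<Rightarrow> (nat \<Rightarrow> 'y) \<Rightarrow> nat \<Rightarrow> (pidx \<Rightarrow> real) \<Rightarrow> real" where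
  "likelihood lk f xs ys n \<theta> = (\<Prod>k<n. lk (ys k) (f (xs k) \<theta>))"

definition posterior :: "(pidx \<Rightarrow> real) measure \<Rightarrow> ((pidx \<Rightarrow> real) \<Rightarrow> real) \<Rightarrow> ((pidx \<Rightarrow> real) \<Rightarrow> real)
    \<Rightarrow> (pidx \<Rightarrow> real) \<Rightarrow> real" where
  "posterior M lik prior \<theta> = lik \<theta> * prior \<theta> / (\<integral>\<theta>'. lik \<theta>' * prior \<theta>' \<partial>M)"

end

theory Submission
  imports Defs
begin

lemma preact_upd:
  assumes "t \<noteq> 1 \<or> h i = 0"
  shows "preact d t (\<theta>(Wt 1 i j := x)) h = preact d t \<theta> h"
  unfolding preact_def
proof (rule ext)
  fix j'
  have "(\<Sum>i'<d (t - 1). h i' * (\<theta>(Wt 1 i j := x)) (Wt t i' j')) = (\<Sum>i'<d (t - 1). h i' * \<theta> (Wt t i' j'))"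
    by (rule sum.cong) (use assms in auto)
  then show "(if j' < d t then (\<Sum>i'<d (t - 1). h i' * (\<theta>(Wt 1 i j := x)) (Wt t i' j')) + (\<theta>(Wt 1 i j := x)) (Bt t j') else 0)
    = (if j' < d t then (\<Sum>i'<d (t - 1). h i' * \<theta> (Wt t i' j')) + \<theta> (Bt t j') else 0)"
    by simp
qed

lemma hidden_upd:
  assumes "hz i = 0"
  shows "hidden \<phi> d (\<theta>(Wt 1 i j := x)) hz t = hidden \<phi> d \<theta> hz t"
proof (induction t)
  case 0 then show ?case by simp
next
  case (Suc t)
  have "preact d (Suc t) (\<theta>(Wt 1 i j := x)) (hidden \<phi> d \<theta> hz t) = preact d (Suc t) \<theta> (hidden \<phi> d \<theta> hz t)"
    by (rule preact_upd) (cases t, use assms in auto)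
  then show ?case by (simp only: hidden.simps Suc.IH)
qed

lemma net_upd:
  assumes "hz i = 0"
  shows "net \<phi> \<psi> L d hz (\<theta>(Wt 1 i j := x)) = net \<phi> \<psi> L d hz \<theta>"
proof -
  have "preact d L (\<theta>(Wt 1 i j := x)) (hidden \<phi> d \<theta> hz (L - 1)) = preact d L \<theta> (hidden \<phi> d \<theta> hz (L - 1))"
    by (rule preact_upd) (cases "L = 1", use assms in auto)
  then show ?thesis unfolding net_def by (simp only: hidden_upd[where hz=hz and i=i, OF assms])
qed

lemma lik_upd:
  assumes "\<forall>k<n. xs k i = 0"
  shows "likelihood lk (net \<phi> \<psi> L d) xs ys n (\<theta>(Wt 1 i j := x)) = likelihood lk (net \<phi> \<psi> L d) xs ys n \<theta>"
  unfolding likelihood_def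
proof (rule prod.cong[OF refl])
  fix k assume "k \<in> {..<n}"
  hence "xs k i = 0" using assms by simp
  then show "lk (ys k) (net \<phi> \<psi> L d (xs k) (\<theta>(Wt 1 i j := x))) = lk (ys k) (net \<phi> \<psi> L d (xs k) \<theta>)"
    by (simp only: net_upd[where hz="xs k" and i=i])
qed

theorem lemma1:
  fixes \<phi> :: "real \<Rightarrow> real" and \<psi> :: "(nat \<Rightarrow> real) \<Rightarrow> 'o"
    and L :: nat and d :: "nat \<Rightarrow> nat"
    and lk :: "'y \<Rightarrow> 'o \<Rightarrow> real"
    and xs :: "nat \<Rightarrow> nat \<Rightarrow> real" and ys :: "nat \<Rightarrow> 'y" and n :: nat
    and prior :: "(pidx \<Rightarrow> real) \<Rightarrow> real"
    and p1 :: "real \<Rightarrow> real" and prest :: "(pidx \<Rightarrow> real) \<Rightarrow> real"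
    and i j :: nat
  defines "M \<equiv> param_measure L d"
    and "w \<equiv> Wt 1 i j"
    and "R \<equiv> param_index L d - {Wt 1 i j}"
    and "post \<equiv> posterior (param_measure L d) (likelihood lk (net \<phi> \<psi> L d) xs ys n) prior"
  assumes "1 \<le> L"
    and "i < d 0" and "j < d 1"
    and zero_feature: "\<forall>k<n. xs k i = 0"
    and lik_nonneg: "\<forall>y v. 0 \<le> lk y v"
    and prior_nonneg: "\<forall>\<theta>\<in>space M. 0 \<le> prior \<theta>"
    and prior_density: "(\<integral>\<theta>. prior \<theta> \<partial>M) = 1"
    and factor: "\<forall>\<theta>\<in>space M. prior \<theta> = p1 (\<theta> w) * prest (restrict \<theta> R)"
    and p1_nonneg: "\<forall>x. 0 \<le> p1 x"
    and p1_density: "(\<integral>x. p1 x \<partial>lborel) = 1"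
    and evidence_pos: "0 < (\<integral>\<theta>. likelihood lk (net \<phi> \<psi> L d) xs ys n \<theta> * prior \<theta> \<partial>M)"
  shows "(\<forall>\<theta>\<in>space M. post \<theta> = (\<integral>x. post ((restrict \<theta> R)(w := x)) \<partial>lborel) * p1 (\<theta> w))
       \<and> (\<forall>\<theta>\<in>space M. (\<forall>\<theta>'\<in>space M. post \<theta>' \<le> post \<theta>) \<longrightarrow> (\<forall>x. p1 x \<le> p1 (\<theta> w)))"
proof -
  define lik where "lik = likelihood lk (net \<phi> \<psi> L d) xs ys n"
  define Z where "Z = (\<integral>\<theta>. lik \<theta> * prior \<theta> \<partial>M)"
  have Zpos: "Z > 0" using evidence_pos unfolding Z_def lik_def .
  have post_eq: "post \<theta> = lik \<theta> * prior \<theta> / Z" for \<theta>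
    unfolding post_def posterior_def Z_def lik_def M_def by simp
  have lik_nn: "lik \<theta> \<ge> 0" for \<theta>
    unfolding lik_def likelihood_def using lik_nonneg by (intro prod_nonneg) auto
  have post_nn: "\<theta> \<in> space M \<Longrightarrow> post \<theta> \<ge> 0" for \<theta>
    using post_eq lik_nn prior_nonneg Zpos by simp
  have wI: "w \<in> param_index L d" unfolding w_def param_index_def using assms(5-7) by auto
  have spM: "space M = PiE (param_index L d) (\<lambda>_. UNIV)"
    unfolding M_def param_measure_def by (simp add: space_PiM)
  have upd_eq: "(restrict \<theta> R)(w := x) = \<theta>(w := x)" if "\<theta> \<in> space M" for \<theta> x
  proof
    fix p show "((restrict \<theta> R)(w := x)) p = (\<theta>(w := x)) p"
      using that unfolding spM R_def w_def by (auto simp: PiE_def extensional_def)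
  qed
  have upd_sp: "\<theta>(w := x) \<in> space M" if "\<theta> \<in> space M" for \<theta> x
    using that wI unfolding spM by (auto simp: PiE_def extensional_def)
  have rR: "restrict (\<theta>(w := x)) R = restrict \<theta> R" for \<theta> x
    unfolding R_def w_def by (auto simp: restrict_def)
  have post_upd: "post (\<theta>(w := x)) = (lik \<theta> * prest (restrict \<theta> R) / Z) * p1 x"
    if "\<theta> \<in> space M" for \<theta> x
  proof -
    have "prior (\<theta>(w := x)) = p1 x * prest (restrict \<theta> R)"
      using factor upd_sp[OF that] by (simp add: rR[of \<theta> x])
    moreover have "lik (\<theta>(w := x)) = lik \<theta>"
      unfolding lik_def w_def by (rule lik_upd[where xs=xs and i=i and n=n, OF zero_feature])
    ultimately show ?thesis using post_eq by simp
  qed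
  have post_self: "post \<theta> = (lik \<theta> * prest (restrict \<theta> R) / Z) * p1 (\<theta> w)"
    if "\<theta> \<in> space M" for \<theta>
    using post_upd[OF that, of "\<theta> w"] by simp
  show ?thesis
  proof (intro conjI ballI impI allI)
    fix \<theta> assume th: "\<theta> \<in> space M"
    have "(\<integral>x. post ((restrict \<theta> R)(w := x)) \<partial>lborel)
        = (\<integral>x. (lik \<theta> * prest (restrict \<theta> R) / Z) * p1 x \<partial>lborel)"
      using upd_eq[OF th] post_upd[OF th] by simp
    also have "\<dots> = lik \<theta> * prest (restrict \<theta> R) / Z"
      using p1_density by simp
    finally show "post \<theta> = (\<integral>x. post ((restrict \<theta> R)(w := x)) \<partial>lborel) * p1 (\<theta> w)"
      using post_self[OF th] by simp
  next
    fix \<theta> x assume th: "\<theta> \<in> space M" and mx: "\<forall>\<theta>'\<in>space M. post \<theta>' \<le> post \<theta>"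
    define C where "C = lik \<theta> * prest (restrict \<theta> R) / Z"
    show "p1 x \<le> p1 (\<theta> w)"
    proof (rule ccontr)
      assume "\<not> p1 x \<le> p1 (\<theta> w)"
      hence gt: "p1 x > p1 (\<theta> w)" by simp
      have "C * p1 x \<le> C * p1 (\<theta> w)"
        using mx upd_sp[OF th] post_upd[OF th, of x] post_self[OF th] unfolding C_def by metis
      hence "C \<le> 0" using gt by (smt (verit) mult_less_cancel_left)
      moreover have "C * p1 x \<ge> 0"
        using post_nn[OF upd_sp[OF th, of x]] post_upd[OF th, of x] unfolding C_def by simp
      hence "C \<ge> 0" using gt p1_nonneg
        by (smt (verit) mult_neg_pos)
      ultimately have "C = 0" by simp
      hence "post \<theta> = 0" using post_self[OF th] unfolding C_def by auto
      hence z: "\<And>\<theta>'. \<theta>' \<in> space M \<Longrightarrow> lik \<theta>' * prior \<theta>' = 0"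
        using mx post_nn post_eq Zpos by (metis antisym divide_eq_0_iff less_irrefl)
      have "Z = (\<integral>\<theta>. 0 \<partial>M)" unfolding Z_def using z by (intro Bochner_Integration.integral_cong) auto
      thus False using Zpos by simp
    qed
  qed
qed

end
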